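(* Let $c=56^2$ and $c'=27$. Let $0<\epsilon\le\Delta\le1$, let $n\ge2$, and let $\tilde p$ be a probability distribution on $\{1,\dots,n\}$. Let $S=c(\Delta/\epsilon)^2\log n$ and let $\beta\le1$ satisfy $1-\beta\ge8\Delta$. Assume $\{1,\dots,n\}$ is partitioned into sets $H$ and $L$ with $\sum_{i\in L}\tilde p_i=1-\beta$, $\sum_{i\in H}\tilde p_i=\beta$, and $\sum_{i\in L}\tilde p_i^2\le (1-\beta)^2/S$. Let $v_1,\dots,v_{k_1}\in[-1,1]^n$ with $k_1=n^2$, and let $p_1,\dots,p_{k_2}$ be probability distributions on $\{1,\dots,n\}$ with $k_2\le n^{c'(\Delta/\epsilon)^2}$. Then there exists a probability distribution $\tilde p'$ on $\{1,\dots,n\}$ with $\mathrm{supp}(\tilde p')\subseteq\mathrm{supp}(\tilde p)$ such that: (1) $d(\tilde p,\tilde p')=3\Delta$; (2) $\tilde p'\cdot v_i\le\tilde p\cdot v_i+\epsilon$ for all $i\in\{1,\dots,k_1\}$; (3) $d(\tilde p',p_i)>d(\tilde p,p_i)-\Delta$ for all $i\in\{1,\dots,k_2\}$.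
   Context: $\mathrm{supp}(p)=\{i:p_i>0\}$. For distributions $p,p'$, $d(p,p')=\frac12\sum_i|p_i-p'_i|$ (variation distance). $\log$ is the natural logarithm. *)

theory Defs
  imports Complex_Main
begin

text \<open>Probability distributions on {1..n}, represented as functions nat => real
  (values outside {1..n} are irrelevant).\<close>
definition prob_dist :: "nat \<Rightarrow> (nat \<Rightarrow> real) \<Rightarrow> bool" where
  "prob_dist n p \<longleftrightarrow> (\<forall>i\<in>{1..n}. p i \<ge> 0) \<and> (\<Sum>i=1..n. p i) = 1"

definition supp :: "nat \<Rightarrow> (nat \<Rightarrow> real) \<Rightarrow> nat set" where
  "supp n p = {i\<in>{1..n}. p i > 0}"

definition var_dist :: "nat \<Rightarrow> (nat \<Rightarrow> real) \<Rightarrow> (nat \<Rightarrow> real) \<Rightarrow> real" where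
  "var_dist n p q = (1/2) * (\<Sum>i=1..n. \<bar>p i - q i\<bar>)"

definition dotp :: "nat \<Rightarrow> (nat \<Rightarrow> real) \<Rightarrow> (nat \<Rightarrow> real) \<Rightarrow> real" where
  "dotp n p v = (\<Sum>i=1..n. p i * v i)"

end

theory Submission imports Defs "HOL-Probability.Probability" begin



lemma exists_pmf:
  fixes f :: "nat \<Rightarrow> real" and A :: "nat set"
  assumes "finite A" "\<And>j. f j \<ge> 0" "\<And>j. j \<notin> A \<Longrightarrow> f j = 0" "(\<Sum>j\<in>A. f j) = 1"
  shows "\<exists>Q. \<forall>j. pmf Q j = f j"
proof -
  have "(\<integral>\<^sup>+x. ennreal (f x) \<partial>count_space UNIV) = (\<integral>\<^sup>+x. ennreal (f x) \<partial>count_space A)"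
    using assms(3) by (subst nn_integral_count_space_indicator) (auto intro!: nn_integral_cong split: split_indicator)
  also have "\<dots> = (\<Sum>x\<in>A. ennreal (f x))" using assms(1) by (rule nn_integral_count_space_finite)
  also have "\<dots> = ennreal (\<Sum>x\<in>A. f x)" using assms(2) by (simp add: sum_ennreal)
  finally have "(\<integral>\<^sup>+x. ennreal (f x) \<partial>count_space UNIV) = 1" using assms(4) by simp
  then show ?thesis using pmf_embed_pmf[of f] assms(2) by blast
qed

lemma hoeff_pmf:
  fixes Q :: "nat pmf" and w :: "nat \<Rightarrow> real" and m :: nat and t :: real
  assumes w: "\<And>j. \<bar>w j\<bar> \<le> 1" and m: "m > 0" and t: "t \<ge> 0"
  shows "measure_pmf.prob (Pi_pmf {..<m} 0 (\<lambda>_. Q)) {f. (\<Sum>k<m. w (f k)) \<ge> m * measure_pmf.expectation Q w + m*t} \<le> exp (-(m*t^2/2))"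
    and "measure_pmf.prob (Pi_pmf {..<m} 0 (\<lambda>_. Q)) {f. (\<Sum>k<m. w (f k)) \<le> m * measure_pmf.expectation Q w - m*t} \<le> exp (-(m*t^2/2))"
proof -
  define PI where "PI = Pi_pmf {..<m} 0 (\<lambda>_. Q)"
  have comp: "measure_pmf.expectation PI (\<lambda>f. w (f k)) = measure_pmf.expectation Q w" if "k < m" for k
  proof -
    have "measure_pmf.expectation PI (\<lambda>f. w (f k)) = measure_pmf.expectation (map_pmf (\<lambda>f. f k) PI) w"
      by simp
    also have "map_pmf (\<lambda>f. f k) PI = Q" using that by (simp add: PI_def Pi_pmf_component)
    finally show ?thesis .
  qed
  interpret H: Hoeffding_ineq "measure_pmf PI" "{..<m}" "\<lambda>k f. w (f k)" "\<lambda>_. -1" "\<lambda>_. 1"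
     "\<Sum>k<m. measure_pmf.expectation PI (\<lambda>f. w (f k))"
  proof unfold_locales
    show "prob_space.indep_vars (measure_pmf PI) (\<lambda>_. borel) (\<lambda>k f. w (f k)) {..<m}"
      unfolding PI_def
      by (intro prob_space.indep_vars_compose2[OF _ indep_vars_Pi_pmf])
         (auto simp: measure_pmf.prob_space_axioms)
  next
    fix i show "AE x in measure_pmf PI. w (x i) \<in> {-1..1}" using w by (auto simp: abs_le_iff)
  qed auto
  have mu: "(\<Sum>k<m. measure_pmf.expectation PI (\<lambda>f. w (f k))) = m * measure_pmf.expectation Q w"
    using comp by simp
  have s: "(\<Sum>i<m. (1 - (-1::real))\<^sup>2) = 4 * m" by simp
  have e: "exp (-2 * (m*t)\<^sup>2 / (4*m)) = exp (-(m*t^2/2))" using m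
    by (simp add: power2_eq_square)
  show "measure_pmf.prob PI {f. (\<Sum>k<m. w (f k)) \<ge> m * measure_pmf.expectation Q w + m*t} \<le> exp (-(m*t^2/2))"
    using H.Hoeffding_ineq_ge[of "m*t"] t m unfolding mu s e by simp
  show "measure_pmf.prob PI {f. (\<Sum>k<m. w (f k)) \<le> m * measure_pmf.expectation Q w - m*t} \<le> exp (-(m*t^2/2))"
    using H.Hoeffding_ineq_le[of "m*t"] t m unfolding mu s e by simp
qed


lemma cnt_swap:
  fixes \<omega> :: "nat \<Rightarrow> nat" and g :: "nat \<Rightarrow> real"
  assumes "\<And>k. k < m \<Longrightarrow> \<omega> k \<in> A" "finite A"
  shows "(\<Sum>j\<in>A. (\<Sum>k<m. if \<omega> k = j then 1 else 0) * g j) = (\<Sum>k<m. g (\<omega> k))"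
proof -
  have "(\<Sum>j\<in>A. (\<Sum>k<m. if \<omega> k = j then 1 else 0) * g j) = (\<Sum>j\<in>A. \<Sum>k<m. if \<omega> k = j then g j else 0)"
    by (auto simp add: sum_distrib_right intro!: sum.cong)
  also have "\<dots> = (\<Sum>k<m. \<Sum>j\<in>A. if \<omega> k = j then g j else 0)" by (rule sum.swap)
  also have "\<dots> = (\<Sum>k<m. g (\<omega> k))"
    using assms by (intro sum.cong refl) (simp add: sum.delta)
  finally show ?thesis .
qed


lemma construct:
  fixes n m k1 k2 :: nat and pt qf :: "nat \<Rightarrow> real" and L :: "nat set" and \<omega> :: "nat \<Rightarrow> nat"
    and \<Delta> \<epsilon> A :: real and v P :: "nat \<Rightarrow> nat \<Rightarrow> real"
  assumes pt: "prob_dist n pt" and L: "L \<subseteq> {1..n}" and A: "8 * \<Delta> \<le> A" and D: "\<Delta> > 0" "\<epsilon> > 0"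
    and qf_def: "qf = (\<lambda>j. if j \<in> L then pt j / A else 0)" and sqf: "(\<Sum>j\<in>L. pt j) = A"
    and m: "m > 0" and \<omega>L: "\<And>k. k < m \<Longrightarrow> \<omega> k \<in> L \<and> pt (\<omega> k) > 0"
    and Y: "(\<Sum>k<m. qf (\<omega> k)) < 1/2"
    and V: "\<forall>i\<in>{1..k1}. (\<Sum>k<m. v i (\<omega> k)) < m * (\<Sum>j=1..n. qf j * v i j) + m * (\<epsilon> / (6*\<Delta>))"
    and PP: "\<forall>i\<in>{1..k2}. (\<Sum>k<m. (\<lambda>j. if pt j < P i j then -1 else 1::real) (\<omega> k))
               > m * (\<Sum>j=1..n. qf j * (if pt j < P i j then -1 else 1)) - m / 3"
  shows "\<exists>pt'. prob_dist n pt' \<and> supp n pt' \<subseteq> supp n pt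
           \<and> var_dist n pt pt' = 3 * \<Delta>
           \<and> (\<forall>i\<in>{1..k1}. dotp n pt' (v i) \<le> dotp n pt (v i) + \<epsilon>)
           \<and> (\<forall>i\<in>{1..k2}. var_dist n pt' (P i) > var_dist n pt (P i) - \<Delta>)"
proof -
  have Apos: "A > 0" using A D by linarith
  have ptnn: "\<And>j. j \<in> {1..n} \<Longrightarrow> pt j \<ge> 0" and pt1: "(\<Sum>j=1..n. pt j) = 1"
    using pt by (auto simp: prob_dist_def)
  have \<omega>n: "\<And>k. k < m \<Longrightarrow> \<omega> k \<in> {1..n}" using \<omega>L L by blast
  define cnt where "cnt = (\<lambda>j. (\<Sum>k<m. if \<omega> k = j then 1 else 0::real))"
  define e where "e = (\<lambda>j. cnt j / m)"
  have swap: "(\<Sum>j=1..n. cnt j * g j) = (\<Sum>k<m. g (\<omega> k))" for g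
    unfolding cnt_def by (rule cnt_swap) (use \<omega>n in auto)
  have eswap: "(\<Sum>j=1..n. e j * g j) = (\<Sum>k<m. g (\<omega> k)) / m" for g
  proof -
    have "(\<Sum>j=1..n. e j * g j) = (\<Sum>j=1..n. cnt j * g j) / m"
      by (simp add: e_def sum_divide_distrib)
    then show ?thesis using swap[of g] by simp
  qed
  have cnt_nn: "cnt j \<ge> 0" for j unfolding cnt_def by (intro sum_nonneg) auto
  have e_nn: "e j \<ge> 0" for j using cnt_nn[of j] by (simp add: e_def)
  have cnt_pos: "cnt j > 0 \<Longrightarrow> \<exists>k<m. \<omega> k = j" for j
  proof (rule ccontr)
    assume "cnt j > 0" "\<not> (\<exists>k<m. \<omega> k = j)"
    then have "cnt j = 0" unfolding cnt_def by (intro sum.neutral) auto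
    with \<open>cnt j > 0\<close> show False by simp
  qed
  have e_pos: "e j > 0 \<Longrightarrow> j \<in> L \<and> pt j > 0" for j
    using cnt_pos[of j] \<omega>L m by (auto simp: e_def divide_pos_pos zero_less_divide_iff)
  have e1: "(\<Sum>j=1..n. e j) = 1" using eswap[of "\<lambda>_. 1"] m by simp
  have qf_nn: "qf j \<ge> 0" for j using ptnn L Apos by (auto simp: qf_def)
  have qfsum: "(\<Sum>j=1..n. qf j * g j) = (\<Sum>j\<in>L. pt j * g j) / A" for g
  proof -
    have "(\<Sum>j=1..n. qf j * g j) = (\<Sum>j\<in>L. qf j * g j)"
      using L by (intro sum.mono_neutral_right) (auto simp: qf_def)
    also have "\<dots> = (\<Sum>j\<in>L. pt j * g j) / A" by (simp add: qf_def sum_divide_distrib)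
    finally show ?thesis .
  qed
  have q1: "(\<Sum>j=1..n. qf j) = 1" using qfsum[of "\<lambda>_. 1"] sqf Apos by simp
  define D where "D = (\<Sum>j=1..n. \<bar>e j - qf j\<bar>) / 2"
  have minle: "min (e j) (qf j) \<le> cnt j * qf j" for j
  proof (cases "cnt j = 0")
    case True then show ?thesis by (simp add: e_def)
  next
    case False
    then have "cnt j \<ge> 1"
    proof -
      from False cnt_nn[of j] have "cnt j > 0" by simp
      then obtain k where k: "k < m" "\<omega> k = j" using cnt_pos by blast
      have "cnt j = (\<Sum>k'\<in>{..<m}. if \<omega> k' = j then 1 else 0)" by (simp add: cnt_def)
      also have "\<dots> \<ge> (\<Sum>k'\<in>{k}. if \<omega> k' = j then 1 else 0::real)"
        using k by (intro sum_mono2) auto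
      finally show ?thesis using k by simp
    qed
    then have "qf j \<le> cnt j * qf j" using qf_nn[of j] by (simp add: mult_le_cancel_right1)
    then show ?thesis by linarith
  qed
  have "(\<Sum>j=1..n. \<bar>e j - qf j\<bar>) = (\<Sum>j=1..n. e j + qf j - 2 * min (e j) (qf j))"
    by (intro sum.cong refl) (auto simp: min_def)
  also have "\<dots> = 2 - 2 * (\<Sum>j=1..n. min (e j) (qf j))"
    using e1 q1 by (simp add: sum.distrib sum_subtractf sum_distrib_left)
  also have "\<dots> \<ge> 2 - 2 * (\<Sum>j=1..n. cnt j * qf j)"
    using minle by (simp add: sum_mono)
  finally have "(\<Sum>j=1..n. \<bar>e j - qf j\<bar>) \<ge> 2 - 2 * (\<Sum>k<m. qf (\<omega> k))" using swap[of qf] by simp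
  then have Dge: "D > 1/2" using Y by (simp add: D_def)
  define \<alpha> where "\<alpha> = 3 * \<Delta> / D"
  have \<alpha>pos: "\<alpha> > 0" using D Dge by (simp add: \<alpha>_def)
  have \<alpha>le: "\<alpha> \<le> 6 * \<Delta>"
  proof -
    have "3 * \<Delta> \<le> 6 * \<Delta> * D" using mult_left_mono[of 1 "2*D" "3*\<Delta>"] Dge D by simp
    then show ?thesis using Dge by (simp add: \<alpha>_def divide_le_eq)
  qed
  define pt' where "pt' = (\<lambda>j. pt j + \<alpha> * (e j - qf j))"
  have "prob_dist n pt'"
    unfolding prob_dist_def
  proof
    show "\<forall>i\<in>{1..n}. 0 \<le> pt' i"
    proof
      fix j assume j: "j \<in> {1..n}"
      show "0 \<le> pt' j"
      proof (cases "j \<in> L")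
        case True
        have "\<alpha> * (pt j / A) \<le> pt j"
        proof -
          have "\<alpha> * (pt j / A) = pt j * (\<alpha> / A)" by simp
          also have "\<dots> \<le> pt j * 1"
            using ptnn[OF j] \<alpha>le A D Apos by (intro mult_left_mono) (auto simp: divide_le_eq)
          finally show ?thesis by simp
        qed
        then show ?thesis using True e_nn[of j] \<alpha>pos
          by (simp add: pt'_def qf_def algebra_simps) (smt (verit) mult_nonneg_nonneg)
      next
        case False
        then show ?thesis using ptnn[OF j] e_nn[of j] \<alpha>pos by (simp add: pt'_def qf_def)
      qed
    qed
    show "(\<Sum>i = 1..n. pt' i) = 1"
      using pt1 e1 q1 by (simp add: pt'_def sum.distrib sum_distrib_left[symmetric] sum_subtractf)
  qed
  moreover have "supp n pt' \<subseteq> supp n pt"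
  proof
    fix j assume "j \<in> supp n pt'"
    then have j: "j \<in> {1..n}" "pt' j > 0" by (auto simp: supp_def)
    show "j \<in> supp n pt"
    proof (cases "pt j > 0")
      case True then show ?thesis using j by (simp add: supp_def)
    next
      case False
      then have "pt j = 0" using ptnn[OF j(1)] by simp
      then have "qf j = 0" by (simp add: qf_def)
      then have "e j > 0" using j(2) \<open>pt j = 0\<close> \<alpha>pos by (simp add: pt'_def zero_less_mult_iff)
      then show ?thesis using e_pos False by blast
    qed
  qed
  moreover have "var_dist n pt pt' = 3 * \<Delta>"
  proof -
    have "var_dist n pt pt' = (1/2) * (\<Sum>j=1..n. \<alpha> * \<bar>e j - qf j\<bar>)"
      unfolding var_dist_def pt'_def using \<alpha>pos by (intro arg_cong[where f="\<lambda>x. (1/2) * x"] sum.cong) (auto simp: abs_mult)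
    also have "\<dots> = \<alpha> * D" by (simp add: D_def sum_distrib_left[symmetric])
    also have "\<dots> = 3 * \<Delta>" using Dge by (simp add: \<alpha>_def)
    finally show ?thesis .
  qed
  moreover have "\<forall>i\<in>{1..k1}. dotp n pt' (v i) \<le> dotp n pt (v i) + \<epsilon>"
  proof
    fix i assume i: "i \<in> {1..k1}"
    have "dotp n pt' (v i) = dotp n pt (v i) + \<alpha> * ((\<Sum>j=1..n. e j * v i j) - (\<Sum>j=1..n. qf j * v i j))"
      unfolding dotp_def pt'_def by (simp add: algebra_simps sum.distrib sum_subtractf sum_distrib_left)
    also have "(\<Sum>j=1..n. e j * v i j) - (\<Sum>j=1..n. qf j * v i j) < \<epsilon> / (6*\<Delta>)"
    proof -
      have "(\<Sum>k<m. v i (\<omega> k)) / m < (\<Sum>j=1..n. qf j * v i j) + \<epsilon> / (6*\<Delta>)"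
        using V i m by (simp add: divide_less_eq algebra_simps)
      then show ?thesis using eswap[of "v i"] by simp
    qed
    then have "\<alpha> * ((\<Sum>j=1..n. e j * v i j) - (\<Sum>j=1..n. qf j * v i j)) \<le> \<alpha> * (\<epsilon> / (6*\<Delta>))"
      using \<alpha>pos by (intro mult_left_mono) auto
    also have "\<alpha> * (\<epsilon> / (6*\<Delta>)) \<le> 6 * \<Delta> * (\<epsilon> / (6*\<Delta>))"
      using \<alpha>le D by (intro mult_right_mono) auto
    also have "\<dots> = \<epsilon>" using D by simp
    finally show "dotp n pt' (v i) \<le> dotp n pt (v i) + \<epsilon>" by simp
  qed
  moreover have "\<forall>i\<in>{1..k2}. var_dist n pt' (P i) > var_dist n pt (P i) - \<Delta>"
  proof
    fix i assume i: "i \<in> {1..k2}"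
    define sg where "sg = (\<lambda>j. if pt j < P i j then -1 else 1::real)"
    have "var_dist n pt' (P i) \<ge> (1/2) * (\<Sum>j=1..n. sg j * (pt' j - P i j))"
      unfolding var_dist_def by (intro mult_left_mono sum_mono) (auto simp: sg_def)
    also have "(\<Sum>j=1..n. sg j * (pt' j - P i j)) = (\<Sum>j=1..n. sg j * (pt j - P i j))
        + \<alpha> * ((\<Sum>j=1..n. e j * sg j) - (\<Sum>j=1..n. qf j * sg j))"
      unfolding pt'_def by (simp add: algebra_simps sum.distrib sum_subtractf sum_distrib_left)
    also have "(\<Sum>j=1..n. sg j * (pt j - P i j)) = (\<Sum>j=1..n. \<bar>pt j - P i j\<bar>)"
      by (intro sum.cong) (auto simp: sg_def)
    finally have 1: "var_dist n pt' (P i) \<ge> var_dist n pt (P i) + (1/2) * \<alpha> * ((\<Sum>j=1..n. e j * sg j) - (\<Sum>j=1..n. qf j * sg j))"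
      by (simp add: var_dist_def algebra_simps)
    have "(\<Sum>j=1..n. e j * sg j) - (\<Sum>j=1..n. qf j * sg j) > - 1/3"
    proof -
      have "(\<Sum>k<m. sg (\<omega> k)) / m > (\<Sum>j=1..n. qf j * sg j) - 1/3"
        using PP i m by (simp add: less_divide_eq algebra_simps sg_def)
      then show ?thesis using eswap[of sg] by simp
    qed
    then have "\<alpha> * ((\<Sum>j=1..n. e j * sg j) - (\<Sum>j=1..n. qf j * sg j)) > \<alpha> * (-1/3)"
      using \<alpha>pos by (intro mult_strict_left_mono) auto
    then have "(1/2) * \<alpha> * ((\<Sum>j=1..n. e j * sg j) - (\<Sum>j=1..n. qf j * sg j)) > - \<Delta>"
      using \<alpha>le by linarith
    with 1 show "var_dist n pt' (P i) > var_dist n pt (P i) - \<Delta>" by linarith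
  qed
  ultimately show ?thesis by blast
qed


lemma comp_exp:
  fixes Q :: "nat pmf" and g :: "nat \<Rightarrow> real" and m k :: nat
  assumes "k < m"
  shows "measure_pmf.expectation (Pi_pmf {..<m} 0 (\<lambda>_. Q)) (\<lambda>f. g (f k)) = measure_pmf.expectation Q g"
proof -
  have "measure_pmf.expectation (Pi_pmf {..<m} 0 (\<lambda>_. Q)) (\<lambda>f. g (f k)) =
        measure_pmf.expectation (map_pmf (\<lambda>f. f k) (Pi_pmf {..<m} 0 (\<lambda>_. Q))) g"
    by simp
  also have "map_pmf (\<lambda>f. f k) (Pi_pmf {..<m} 0 (\<lambda>_. Q)) = Q" by (subst Pi_pmf_component) (use assms in auto)
  finally show ?thesis .
qed

lemma numeric:
  fixes r x m k1 k2 :: real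
  assumes r: "r \<ge> 1" and x: "x \<ge> 1/2" and m: "m \<ge> 784 * r * x - 1"
    and k1: "k1 = exp (2 * x)" and k2: "k2 \<le> exp (27 * r * x)" and k2nn: "k2 \<ge> 0"
  shows "k1 * exp (-(m * (1/(36*r)) / 2)) + k2 * exp (-(m * (1/3)^2 / 2)) < 1/2"
proof -
  have e4: "exp (-4::real) \<le> 1/5"
  proof -
    have "exp (4::real) \<ge> 5" using exp_ge_add_one_self[of 4] by simp
    then show ?thesis by (simp add: exp_minus divide_simps)
  qed
  have a: "2 * x - m * (1/(36*r)) / 2 \<le> -4"
  proof -
    have "m * (1/(36*r)) / 2 = m / (72 * r)" by simp
    also have "m / (72 * r) \<ge> (784 * r * x - 1) / (72 * r)" using m r by (intro divide_right_mono) auto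
    moreover have "(784 * r * x - 1) / (72 * r) = 784 * x / 72 - 1 / (72 * r)" using r by (simp add: field_simps)
    moreover have "1 / (72 * r) \<le> 1/72" using r by (simp add: divide_simps)
    ultimately have "m * (1/(36*r)) / 2 \<ge> 784 * x / 72 - 1/72" by linarith
    then show ?thesis using x by linarith
  qed
  have b: "27 * r * x - m * (1/3)^2 / 2 \<le> -4"
  proof -
    have "r * x \<ge> 1/2" using mult_mono[OF r x] r by simp
    then show ?thesis using m by (simp add: power2_eq_square)
  qed
  have "k1 * exp (-(m * (1/(36*r)) / 2)) = exp (2 * x - m * (1/(36*r)) / 2)"
    by (simp only: k1 exp_add[symmetric] diff_conv_add_uminus)
  also have "\<dots> \<le> exp (-4)" using a by simp
  finally have 1: "k1 * exp (-(m * (1/(36*r)) / 2)) \<le> 1/5" using e4 by linarith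
  have "k2 * exp (-(m * (1/3)^2 / 2)) \<le> exp (27 * r * x) * exp (-(m * (1/3)^2 / 2))"
    using k2 by (intro mult_right_mono) auto
  also have "\<dots> = exp (27 * r * x - m * (1/3)^2 / 2)" by (simp only: exp_add[symmetric] diff_conv_add_uminus)
  also have "\<dots> \<le> exp (-4)" using b by simp
  finally have 2: "k2 * exp (-(m * (1/3)^2 / 2)) \<le> 1/5" using e4 by linarith
  from 1 2 show ?thesis by linarith
qed



theorem lemma1:
  fixes c c' \<epsilon> \<Delta> S \<beta> :: real and n k1 k2 :: nat
    and pt :: "nat \<Rightarrow> real" and H L :: "nat set"
    and v :: "nat \<Rightarrow> nat \<Rightarrow> real" and P :: "nat \<Rightarrow> nat \<Rightarrow> real"
  assumes c_def: "c = 56^2" and c'_def: "c' = 27"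
    and eps: "0 < \<epsilon>" "\<epsilon> \<le> \<Delta>" "\<Delta> \<le> 1"
    and n: "n \<ge> 2"
    and pt: "prob_dist n pt"
    and S_def: "S = c * (\<Delta>/\<epsilon>)^2 * ln (real n)"
    and beta: "\<beta> \<le> 1" "1 - \<beta> \<ge> 8 * \<Delta>"
    and part: "H \<union> L = {1..n}" "H \<inter> L = {}"
    and sumL: "(\<Sum>i\<in>L. pt i) = 1 - \<beta>"
    and sumH: "(\<Sum>i\<in>H. pt i) = \<beta>"
    and sqL: "(\<Sum>i\<in>L. (pt i)^2) \<le> (1 - \<beta>)^2 / S"
    and k1: "k1 = n^2"
    and v: "\<forall>i\<in>{1..k1}. \<forall>j\<in>{1..n}. \<bar>v i j\<bar> \<le> 1"
    and k2: "real k2 \<le> real n powr (c' * (\<Delta>/\<epsilon>)^2)"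
    and P: "\<forall>i\<in>{1..k2}. prob_dist n (P i)"
  shows "\<exists>pt'. prob_dist n pt' \<and> supp n pt' \<subseteq> supp n pt
           \<and> var_dist n pt pt' = 3 * \<Delta>
           \<and> (\<forall>i\<in>{1..k1}. dotp n pt' (v i) \<le> dotp n pt (v i) + \<epsilon>)
           \<and> (\<forall>i\<in>{1..k2}. var_dist n pt' (P i) > var_dist n pt (P i) - \<Delta>)"
  proof -
  define A where "A = 1 - \<beta>"
  have D: "\<Delta> > 0" using eps by linarith
  have A8: "8 * \<Delta> \<le> A" using beta by (simp add: A_def)
  have Apos: "A > 0" using A8 D by linarith
  have Lsub: "L \<subseteq> {1..n}" using part by blast
  have finL: "finite L" using Lsub finite_subset by blast
  have ptnn: "\<And>j. j \<in> {1..n} \<Longrightarrow> pt j \<ge> 0" using pt by (auto simp: prob_dist_def)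
  have sqf: "(\<Sum>j\<in>L. pt j) = A" using sumL by (simp add: A_def)
  define qf where "qf = (\<lambda>j. if j \<in> L then pt j / A else 0)"
  have qf_nn: "qf j \<ge> 0" for j using ptnn Lsub Apos by (auto simp: qf_def)
  have qfL: "(\<Sum>j\<in>L. qf j) = 1" using sqf Apos by (simp add: qf_def sum_divide_distrib[symmetric])
  obtain Q where Q: "\<And>j. pmf Q j = qf j"
  proof -
    have "\<exists>Q. \<forall>j. pmf Q j = qf j"
      by (rule exists_pmf[OF finL]) (use qf_nn qfL in \<open>auto simp: qf_def\<close>)
    then show ?thesis using that by blast
  qed
  have setQ: "j \<in> set_pmf Q \<Longrightarrow> j \<in> L \<and> pt j > 0" for j
  proof -
    assume "j \<in> set_pmf Q"
    then have "qf j \<noteq> 0" by (simp add: set_pmf_eq Q)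
    then have "j \<in> L" "pt j \<noteq> 0" by (auto simp: qf_def split: if_splits)
    then show ?thesis using ptnn Lsub by force
  qed
  have EQ: "measure_pmf.expectation Q g = (\<Sum>j=1..n. qf j * g j)" for g
  proof -
    have "measure_pmf.expectation Q g = (\<Sum>j\<in>{1..n}. g j * pmf Q j)"
      by (rule integral_measure_pmf_real) (use setQ Lsub in force)+
    then show ?thesis by (simp add: Q mult.commute)
  qed
  define r where "r = (\<Delta>/\<epsilon>)^2"
  define x where "x = ln (real n)"
  have r1: "r \<ge> 1" using eps by (simp add: r_def)
  have x: "x \<ge> 1/2"
  proof -
    have "ln (1/2::real) \<le> 1/2 - 1" by (rule ln_le_minus_one) simp
    then have "ln (2::real) \<ge> 1/2" by (simp add: ln_div)
    moreover have "ln (2::real) \<le> ln (real n)" using n by simp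
    ultimately show ?thesis by (simp add: x_def)
  qed
  have Sx: "S = 3136 * r * x" using S_def c_def by (simp add: r_def x_def)
  have Spos: "S > 0" using Sx r1 x by simp
  define m where "m = nat \<lfloor>S/4\<rfloor>"
  have mle: "real m \<le> S/4" using Spos of_int_floor_le[of "S/4"] by (simp add: m_def)
  have mge: "real m \<ge> S/4 - 1" using Spos by (simp add: m_def)
  have mpos: "m > 0"
  proof -
    have "S/4 \<ge> 392" using Sx mult_mono[OF r1 x] r1 by simp
    then show ?thesis using mge by linarith
  qed
  define PI where "PI = Pi_pmf {..<m} 0 (\<lambda>_. Q)"
  define Y where "Y = (\<lambda>f::nat\<Rightarrow>nat. \<Sum>k<m. qf (f k))"
  define w where "w = (\<lambda>i j. if j \<in> {1..n} then v i j else 0)"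
  define sg where "sg = (\<lambda>i j. if pt j < P i j then -1 else 1::real)"
  define t1 where "t1 = \<epsilon> / (6*\<Delta>)"
  define B0 where "B0 = {f. Y f \<ge> 1/2}"
  define B1 where "B1 = (\<lambda>i. {f. (\<Sum>k<m. w i (f k)) \<ge> m * measure_pmf.expectation Q (w i) + m * t1})"
  define B2 where "B2 = (\<lambda>i. {f. (\<Sum>k<m. sg i (f k)) \<le> m * measure_pmf.expectation Q (sg i) - m * (1/3)})"
  define B where "B = B0 \<union> (\<Union>i\<in>{1..k1}. B1 i) \<union> (\<Union>i\<in>{1..k2}. B2 i)"
  have qf_le1: "qf j \<le> 1" for j
  proof (cases "j \<in> L")
    case True
    have "qf j \<le> (\<Sum>j\<in>L. qf j)" using True finL qf_nn by (intro member_le_sum) auto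
    then show ?thesis using qfL by simp
  qed (simp add: qf_def)
  have intY: "integrable (measure_pmf PI) Y"
    unfolding Y_def
  proof (rule Bochner_Integration.integrable_sum)
    fix k show "integrable (measure_pmf PI) (\<lambda>f. qf (f k))"
      by (rule measure_pmf.integrable_const_bound[where B=1]) (auto simp: qf_nn qf_le1 abs_le_iff intro: order_trans[OF _ qf_le1])
  qed
  have EY: "measure_pmf.expectation PI Y = m * (\<Sum>j=1..n. qf j * qf j)"
  proof -
    have "measure_pmf.expectation PI Y = (\<Sum>k<m. measure_pmf.expectation PI (\<lambda>f. qf (f k)))"
      unfolding Y_def
      by (rule Bochner_Integration.integral_sum)
         (auto intro: measure_pmf.integrable_const_bound[where B=1] simp: qf_nn qf_le1)
    also have "\<dots> = (\<Sum>k<m. measure_pmf.expectation Q qf)"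
      unfolding PI_def by (intro sum.cong refl comp_exp) auto
    finally show ?thesis by (simp add: EQ)
  qed
  have sq: "(\<Sum>j=1..n. qf j * qf j) \<le> 1 / S"
  proof -
    have "(\<Sum>j=1..n. qf j * qf j) = (\<Sum>j\<in>L. (pt j)^2) / A^2"
    proof -
      have "(\<Sum>j=1..n. qf j * qf j) = (\<Sum>j\<in>L. qf j * qf j)"
        using Lsub by (intro sum.mono_neutral_right) (auto simp: qf_def)
      also have "\<dots> = (\<Sum>j\<in>L. (pt j)^2) / A^2"
        by (simp add: qf_def sum_divide_distrib power2_eq_square)
      finally show ?thesis .
    qed
    also have "\<dots> \<le> ((1 - \<beta>)^2 / S) / A^2" using sqL Apos by (intro divide_right_mono) auto
    also have "\<dots> = 1 / S" using Apos by (simp add: A_def)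
    finally show ?thesis .
  qed
  have PB0: "measure_pmf.prob PI B0 \<le> 1/2"
  proof -
    have "measure_pmf.prob PI {f \<in> space (measure_pmf PI). Y f \<ge> 1/2} \<le> measure_pmf.expectation PI Y / (1/2)"
      by (rule integral_Markov_inequality_measure[where A=UNIV, OF intY]) (auto simp: Y_def qf_nn sum_nonneg)
    also have "\<dots> \<le> 2 * m * (1/S)" using EY mult_left_mono[OF sq, of "2 * real m"] by simp
    also have "\<dots> \<le> 1/2" using mle Spos by (simp add: field_simps)
    finally show ?thesis by (simp add: B0_def)
  qed
  have PB1: "measure_pmf.prob PI (B1 i) \<le> exp (-(m * t1^2/2))" if i: "i \<in> {1..k1}" for i
  proof -
    have "\<And>j. \<bar>w i j\<bar> \<le> 1" using v i by (simp add: w_def)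
    then show ?thesis unfolding B1_def PI_def
      by (rule hoeff_pmf(1)) (use mpos eps D in \<open>auto simp: t1_def\<close>)
  qed
  have PB2: "measure_pmf.prob PI (B2 i) \<le> exp (-(m * (1/3)^2/2))" for i
  proof -
    have "\<And>j. \<bar>sg i j\<bar> \<le> 1" by (simp add: sg_def)
    then show ?thesis unfolding B2_def PI_def
      by (rule hoeff_pmf(2)) (use mpos in auto)
  qed
  have t1sq: "t1^2 = 1/(36*r)" using eps D by (simp add: t1_def r_def power2_eq_square field_simps)
  have PB: "measure_pmf.prob PI B < 1"
  proof -
    have "measure_pmf.prob PI B \<le> measure_pmf.prob PI B0 + measure_pmf.prob PI (\<Union>i\<in>{1..k1}. B1 i)
             + measure_pmf.prob PI (\<Union>i\<in>{1..k2}. B2 i)"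
      unfolding B_def
      using measure_Un_le[of "B0 \<union> (\<Union>i\<in>{1..k1}. B1 i)" "measure_pmf PI" "\<Union>i\<in>{1..k2}. B2 i"]
            measure_Un_le[of "B0" "measure_pmf PI" "\<Union>i\<in>{1..k1}. B1 i"]
      by simp
    also have "measure_pmf.prob PI (\<Union>i\<in>{1..k1}. B1 i) \<le> (\<Sum>i\<in>{1..k1}. measure_pmf.prob PI (B1 i))"
      by (rule measure_pmf.finite_measure_subadditive_finite) auto
    also have "\<dots> \<le> (\<Sum>i\<in>{1..k1}. exp (-(m * t1^2/2)))" by (intro sum_mono PB1)
    also have "measure_pmf.prob PI (\<Union>i\<in>{1..k2}. B2 i) \<le> (\<Sum>i\<in>{1..k2}. measure_pmf.prob PI (B2 i))"
      by (rule measure_pmf.finite_measure_subadditive_finite) auto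
    also have "\<dots> \<le> (\<Sum>i\<in>{1..k2}. exp (-(m * (1/3)^2/2)))" by (intro sum_mono PB2)
    finally have "measure_pmf.prob PI B \<le> 1/2 + real k1 * exp (-(m * (1/(36*r))/2)) + real k2 * exp (-(m * (1/3)^2/2))"
      using PB0 t1sq by simp
    moreover have "real k1 * exp (-(m * (1/(36*r))/2)) + real k2 * exp (-(m * (1/3)^2/2)) < 1/2"
    proof (rule numeric[OF r1 x])
      show "real m \<ge> 784 * r * x - 1" using mge Sx by simp
      show "real k1 = exp (2 * x)"
        using n exp_of_nat_mult[of 2 "ln (real n)"] by (simp add: k1 x_def)
      show "real k2 \<le> exp (27 * r * x)"
        using k2 n by (simp add: c'_def r_def x_def powr_def)
    qed simp
    ultimately show ?thesis by linarith
  qed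
  obtain \<omega> where \<omega>: "\<omega> \<in> set_pmf PI" "\<omega> \<notin> B"
  proof -
    have "measure_pmf.prob PI (space (measure_pmf PI) - B) = 1 - measure_pmf.prob PI B"
      by (rule measure_pmf.prob_compl) auto
    then have "measure_pmf.prob PI (- B) \<noteq> 0" using PB by (simp add: Compl_eq_Diff_UNIV)
    then have "set_pmf PI \<inter> - B \<noteq> {}" by (simp add: measure_pmf_zero_iff)
    then show ?thesis using that by blast
  qed
  have \<omega>L: "\<And>k. k < m \<Longrightarrow> \<omega> k \<in> L \<and> pt (\<omega> k) > 0"
  proof -
    fix k assume "k < m"
    then have "\<omega> k \<in> set_pmf Q" using \<omega>(1) by (auto simp: PI_def set_Pi_pmf PiE_dflt_def)
    then show "\<omega> k \<in> L \<and> pt (\<omega> k) > 0" using setQ by blast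
  qed
  show ?thesis
  proof (rule construct[OF pt Lsub A8 D eps(1) qf_def sqf mpos \<omega>L])
    show "(\<Sum>k<m. qf (\<omega> k)) < 1/2" using \<omega>(2) by (auto simp: B_def B0_def Y_def)
    show "\<forall>i\<in>{1..k1}. (\<Sum>k<m. v i (\<omega> k)) < m * (\<Sum>j=1..n. qf j * v i j) + m * (\<epsilon> / (6*\<Delta>))"
    proof
      fix i assume i: "i \<in> {1..k1}"
      have "(\<Sum>k<m. w i (\<omega> k)) = (\<Sum>k<m. v i (\<omega> k))"
        using \<omega>L Lsub by (intro sum.cong refl) (force simp: w_def)
      moreover have "(\<Sum>j=1..n. qf j * w i j) = (\<Sum>j=1..n. qf j * v i j)"
        by (intro sum.cong refl) (auto simp: w_def)
      moreover have "\<omega> \<notin> B1 i" using \<omega>(2) i by (auto simp: B_def)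
      ultimately show "(\<Sum>k<m. v i (\<omega> k)) < m * (\<Sum>j=1..n. qf j * v i j) + m * (\<epsilon> / (6*\<Delta>))"
        by (auto simp: B1_def EQ t1_def)
    qed
    show "\<forall>i\<in>{1..k2}. (\<Sum>k<m. (\<lambda>j. if pt j < P i j then -1 else 1::real) (\<omega> k))
               > m * (\<Sum>j=1..n. qf j * (if pt j < P i j then -1 else 1)) - m / 3"
    proof
      fix i assume i: "i \<in> {1..k2}"
      have "\<omega> \<notin> B2 i" using \<omega>(2) i by (auto simp: B_def)
      then show "(\<Sum>k<m. (\<lambda>j. if pt j < P i j then -1 else 1::real) (\<omega> k))
               > m * (\<Sum>j=1..n. qf j * (if pt j < P i j then -1 else 1)) - m / 3"
        by (auto simp: B2_def EQ sg_def)
    qed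
  qed
qed

end
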